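(* For all $m\in\mathbb N$, all $\epsilon\in(0,1)$ and all $c\in(0,1/5)$, $$\mathbb E_{\theta^\circ}P_{\vartheta^m|Y}\Big(\|\vartheta^m-\theta^\circ\|^2> b_m+3\bar\sigma_m+\tfrac32 m\,\sigma_{(m)}+4r_m\Big)\le 2\exp(-m/36),$$ $$\mathbb E_{\theta^\circ}P_{\vartheta^m|Y}\Big(\|\vartheta^m-\theta^\circ\|^2< b_m+\bar\sigma_m-4c\,(m\,\sigma_{(m)}+r_m)\Big)\le 2\exp(-c^2m/2).$$
   Context: Let $\ell^2$ be the space of square-summable real sequences with norm $\|\cdot\|$. Fix a bounded real sequence $\lambda=(\lambda_j)_{j\ge1}$ with $\lambda_j\ne0$ for all $j$, a noise level $\epsilon\in(0,1)$ and a true parameter $\theta^\circ\in\ell^2$. The data $Y=(Y_j)_{j\ge1}$ satisfy $Y_j=\lambda_j\theta^\circ_j+\sqrt\epsilon\,\xi_j$ with $\xi_j$ i.i.d. $N(0,1)$; $\mathbb E_{\theta^\circ}$, $P_{\theta^\circ}$ denote expectation and probability under this law. Fix prior means $\eta=(\eta_j)_{j\ge1}$ with $\theta^\circ-\eta\in\ell^2$ and prior variances $\tau_j\in(0,\infty)$ (possibly depending on $\epsilon$). For $m\in\mathbb N$ the sieve prior $P_{\vartheta^m}$ is the law of $\vartheta^m=(\vartheta^m_j)_{j\ge1}$ with independent coordinates, $\vartheta^m_j\sim N(\eta_j,\tau_j)$ for $j\le m$ and $\vartheta^m_j=\eta_j$ a.s. for $j>m$, in the model $Y_j=\lambda_j\vartheta^m_j+\sqrt\epsilon\xi_j$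 with $\vartheta^m$ independent of $(\xi_j)$. Put $\sigma_j:=(\lambda_j^2\epsilon^{-1}+\tau_j^{-1})^{-1}$ and $\theta^Y_j:=\sigma_j(\tau_j^{-1}\eta_j+\lambda_j\epsilon^{-1}Y_j)$. The posterior $P_{\vartheta^m|Y}$ makes the coordinates independent with $\vartheta^m_j\sim N(\theta^Y_j,\sigma_j)$ for $j\le m$ and $\vartheta^m_j=\eta_j$ for $j>m$; the Bayes estimator is $\hat\theta^m:=\mathbb E[\vartheta^m|Y]$, i.e. $\hat\theta^m_j=\theta^Y_j$ for $j\le m$, $\hat\theta^m_j=\eta_j$ for $j>m$. Define $b_m:=\sum_{j>m}(\theta^\circ_j-\eta_j)^2$, $\bar\sigma_m:=\sum_{j=1}^m\sigma_j$, $\sigma_{(m)}:=\max_{1\le j\le m}\sigma_j$, $r_m:=\sum_{j=1}^m\sigma_j^2\tau_j^{-2}(\eta_j-\theta^\circ_j)^2$. *)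

theory Defs
  imports "HOL-Probability.Probability"
begin

text \<open>Sequences are indexed from 0: coordinate j of the paper corresponds to j-1 here,
so the first m coordinates are the indices in {..<m}.\<close>

definition post_var :: "(nat \<Rightarrow> real) \<Rightarrow> real \<Rightarrow> (nat \<Rightarrow> real) \<Rightarrow> nat \<Rightarrow> real" where
  "post_var lam eps tau j = inverse ((lam j)\<^sup>2 / eps + inverse (tau j))"

definition post_mean :: "(nat \<Rightarrow> real) \<Rightarrow> real \<Rightarrow> (nat \<Rightarrow> real) \<Rightarrow> (nat \<Rightarrow> real)
    \<Rightarrow> (nat \<Rightarrow> real) \<Rightarrow> nat \<Rightarrow> real" where
  "post_mean lam eps tau eta Y j =
     post_var lam eps tau j * (eta j / tau j + lam j * Y j / eps)"

definition data_law :: "(nat \<Rightarrow> real) \<Rightarrow> real \<Rightarrow> (nat \<Rightarrow> real) \<Rightarrow> (nat \<Rightarrow> real) measure" where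
  "data_law lam eps th =
     distr (PiM UNIV (\<lambda>_. density lborel std_normal_density)) (PiM UNIV (\<lambda>_. borel))
       (\<lambda>xi j. lam j * th j + sqrt eps * xi j)"

text \<open>Posterior of the sieve prior with m free coordinates given data Y.
  normal_density takes the standard deviation, hence the square root of the variance.\<close>
definition sieve_posterior :: "nat \<Rightarrow> (nat \<Rightarrow> real) \<Rightarrow> real \<Rightarrow> (nat \<Rightarrow> real) \<Rightarrow> (nat \<Rightarrow> real)
    \<Rightarrow> (nat \<Rightarrow> real) \<Rightarrow> (nat \<Rightarrow> real) measure" where
  "sieve_posterior m lam eps tau eta Y =
     PiM UNIV (\<lambda>j. if j < m
        then density lborel (normal_density (post_mean lam eps tau eta Y j) (sqrt (post_var lam eps tau j)))
        else return borel (eta j))"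

definition sq_norm :: "(nat \<Rightarrow> real) \<Rightarrow> real" where
  "sq_norm x = (\<Sum>j. (x j)\<^sup>2)"

definition bias :: "nat \<Rightarrow> (nat \<Rightarrow> real) \<Rightarrow> (nat \<Rightarrow> real) \<Rightarrow> real" where
  "bias m th eta = (\<Sum>j. (th (j + m) - eta (j + m))\<^sup>2)"

definition sigma_bar :: "nat \<Rightarrow> (nat \<Rightarrow> real) \<Rightarrow> real \<Rightarrow> (nat \<Rightarrow> real) \<Rightarrow> real" where
  "sigma_bar m lam eps tau = (\<Sum>j<m. post_var lam eps tau j)"

definition sigma_max :: "nat \<Rightarrow> (nat \<Rightarrow> real) \<Rightarrow> real \<Rightarrow> (nat \<Rightarrow> real) \<Rightarrow> real" where
  "sigma_max m lam eps tau = Max (post_var lam eps tau ` {..<m})"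

definition r_term :: "nat \<Rightarrow> (nat \<Rightarrow> real) \<Rightarrow> real \<Rightarrow> (nat \<Rightarrow> real) \<Rightarrow> (nat \<Rightarrow> real)
    \<Rightarrow> (nat \<Rightarrow> real) \<Rightarrow> real" where
  "r_term m lam eps tau eta th =
     (\<Sum>j<m. (post_var lam eps tau j)\<^sup>2 / (tau j)\<^sup>2 * (eta j - th j)\<^sup>2)"

end

theory Submission
  imports Defs
begin


lemma alg1:
  fixes A d x \<mu> c :: real
  assumes "A > 0" "d > 0"
  shows "-(x - \<mu>)\<^sup>2/A + (1-d)/A*(x-c)\<^sup>2 =
     (1-d)/A*(\<mu>-c)\<^sup>2/d + -(x - (\<mu> - (1-d)*c)/d)\<^sup>2/(A/d)"
proof -
  let ?L = "-(x - \<mu>)\<^sup>2/A + (1-d)/A*(x-c)\<^sup>2" and ?R = "(1-d)/A*(\<mu>-c)\<^sup>2/d + -(x - (\<mu> - (1-d)*c)/d)\<^sup>2/(A/d)"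
  have "?L * (A*d) = ?R * (A*d)"
    using assms by (simp add: field_simps power2_eq_square)
  moreover have "A*d \<noteq> 0" using assms by simp
  ultimately show ?thesis by simp
qed

lemma nd_mgf_pointwise:
  fixes \<mu> \<sigma> k c x :: real
  assumes s: "0 < \<sigma>" and d: "0 < 1 - 2*k*\<sigma>\<^sup>2"
  shows "normal_density \<mu> \<sigma> x * exp (k*(x-c)\<^sup>2) =
    (exp (k*(\<mu>-c)\<^sup>2/(1 - 2*k*\<sigma>\<^sup>2)) / sqrt (1 - 2*k*\<sigma>\<^sup>2)) *
    normal_density ((\<mu> - 2*k*\<sigma>\<^sup>2*c)/(1 - 2*k*\<sigma>\<^sup>2)) (\<sigma> / sqrt (1 - 2*k*\<sigma>\<^sup>2)) x"
proof -
  define d where "d = 1 - 2*k*\<sigma>\<^sup>2"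
  define A where "A = 2*\<sigma>\<^sup>2"
  have d0: "0 < d" using d d_def by simp
  have A0: "0 < A" using s A_def by simp
  have kk: "k = (1-d)/A" using A0 unfolding d_def A_def by (simp add: field_simps)
  have kk2: "2*k*\<sigma>\<^sup>2 = 1 - d" unfolding d_def by simp
  have e: "-(x - \<mu>)\<^sup>2/(2*\<sigma>\<^sup>2) + k*(x-c)\<^sup>2 =
     k*(\<mu>-c)\<^sup>2/d + -(x - (\<mu> - 2*k*\<sigma>\<^sup>2*c)/d)\<^sup>2/(2*(\<sigma>/sqrt d)\<^sup>2)"
  proof -
    have "2*(\<sigma>/sqrt d)\<^sup>2 = A/d" using d0 by (simp add: A_def power_divide)
    then show ?thesis unfolding kk2 using alg1[OF A0 d0, of x \<mu> c] unfolding kk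
      by (simp add: A_def)
  qed
  have sq: "sqrt (2*pi*(\<sigma>/sqrt d)\<^sup>2) = sqrt (2*pi*\<sigma>\<^sup>2) / sqrt d"
    using d0 by (simp add: real_sqrt_divide power_divide real_sqrt_mult)
  have "normal_density \<mu> \<sigma> x * exp (k*(x-c)\<^sup>2) = 1 / sqrt (2*pi*\<sigma>\<^sup>2) * exp (-(x - \<mu>)\<^sup>2/(2*\<sigma>\<^sup>2) + k*(x-c)\<^sup>2)"
    unfolding normal_density_def by (simp add: mult_exp_exp algebra_simps)
  also have "\<dots> = 1 / sqrt (2*pi*\<sigma>\<^sup>2) * (exp (k*(\<mu>-c)\<^sup>2/d) * exp (-(x - (\<mu> - 2*k*\<sigma>\<^sup>2*c)/d)\<^sup>2/(2*(\<sigma>/sqrt d)\<^sup>2)))"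
    unfolding e by (simp add: mult_exp_exp)
  also have "\<dots> = (exp (k*(\<mu>-c)\<^sup>2/d) / sqrt d) * normal_density ((\<mu> - 2*k*\<sigma>\<^sup>2*c)/d) (\<sigma> / sqrt d) x"
    unfolding normal_density_def sq using d0 by simp
  finally show ?thesis unfolding d_def .
qed

lemma nd_mgf:
  fixes \<mu> \<sigma> k c :: real
  assumes s: "0 < \<sigma>" and d: "0 < 1 - 2*k*\<sigma>\<^sup>2"
  shows "(\<integral>\<^sup>+x. ennreal (exp (k*(x-c)\<^sup>2)) \<partial>density lborel (normal_density \<mu> \<sigma>)) =
     ennreal (exp (k*(\<mu>-c)\<^sup>2/(1 - 2*k*\<sigma>\<^sup>2)) / sqrt (1 - 2*k*\<sigma>\<^sup>2))"
proof -
  define K where "K = exp (k*(\<mu>-c)\<^sup>2/(1 - 2*k*\<sigma>\<^sup>2)) / sqrt (1 - 2*k*\<sigma>\<^sup>2)"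
  define \<mu>' where "\<mu>' = (\<mu> - 2*k*\<sigma>\<^sup>2*c)/(1 - 2*k*\<sigma>\<^sup>2)"
  define \<sigma>' where "\<sigma>' = \<sigma> / sqrt (1 - 2*k*\<sigma>\<^sup>2)"
  have K0: "0 \<le> K" unfolding K_def using d by simp
  have "(\<integral>\<^sup>+x. ennreal (exp (k*(x-c)\<^sup>2)) \<partial>density lborel (normal_density \<mu> \<sigma>)) =
      (\<integral>\<^sup>+x. ennreal (normal_density \<mu> \<sigma> x) * ennreal (exp (k*(x-c)\<^sup>2)) \<partial>lborel)"
    by (subst nn_integral_density) auto
  also have "\<dots> = (\<integral>\<^sup>+x. ennreal K * ennreal (normal_density \<mu>' \<sigma>' x) \<partial>lborel)"
    apply (rule nn_integral_cong)
    apply (subst ennreal_mult'[symmetric], simp)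
    apply (subst ennreal_mult[symmetric], simp add: K0, simp)
    using nd_mgf_pointwise[OF s d] unfolding K_def \<mu>'_def \<sigma>'_def by simp
  also have "\<dots> = ennreal K * (\<integral>\<^sup>+x. ennreal (normal_density \<mu>' \<sigma>' x) \<partial>lborel)"
    by (rule nn_integral_cmult) auto
  also have "(\<integral>\<^sup>+x. ennreal (normal_density \<mu>' \<sigma>' x) \<partial>lborel) = 1"
  proof -
    have "0 < \<sigma>'" unfolding \<sigma>'_def using s d by (simp add: divide_pos_pos)
    interpret prob_space "density lborel (normal_density \<mu>' \<sigma>')" by (rule prob_space_normal_density[OF \<open>0 < \<sigma>'\<close>])
    show ?thesis using emeasure_space_1 by (simp add: emeasure_density)
  qed
  finally show ?thesis unfolding K_def by simp
qed




lemma PiM_prod_nn: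
  fixes M :: "nat \<Rightarrow> 'a measure" and f :: "nat \<Rightarrow> 'a \<Rightarrow> ennreal"
  assumes P: "\<And>i. prob_space (M i)" and f: "\<And>i. i < m \<Longrightarrow> f i \<in> borel_measurable (M i)"
  shows "(\<integral>\<^sup>+ v. (\<Prod>j<m. f j (v j)) \<partial>PiM UNIV M) = (\<Prod>j<m. integral\<^sup>N (M j) (f j))"
proof -
  interpret product_prob_space M UNIV
    by (simp add: product_prob_space_def product_prob_space_axioms_def product_sigma_finite_def P prob_space_imp_sigma_finite)
  have meas: "(\<lambda>w. \<Prod>j<m. f j (w j)) \<in> borel_measurable (PiM {..<m} M)"
    using f by (intro borel_measurable_prod_ennreal) (auto intro: measurable_compose[OF measurable_component_singleton])
  have "(\<Prod>j<m. integral\<^sup>N (M j) (f j)) = (\<integral>\<^sup>+ w. (\<Prod>j<m. f j (w j)) \<partial>PiM {..<m} M)"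
    using f by (intro product_nn_integral_prod[symmetric]) auto
  also have "\<dots> = (\<integral>\<^sup>+ w. (\<Prod>j<m. f j (w j)) \<partial>distr (PiM UNIV M) (PiM {..<m} M) (\<lambda>x. restrict x {..<m}))"
    by (subst distr_PiM_restrict_finite) auto
  also have "\<dots> = (\<integral>\<^sup>+ v. (\<Prod>j<m. f j (restrict v {..<m} j)) \<partial>PiM UNIV M)"
    by (rule nn_integral_distr) (auto simp: meas)
  also have "\<dots> = (\<integral>\<^sup>+ v. (\<Prod>j<m. f j (v j)) \<partial>PiM UNIV M)"
    by (intro nn_integral_cong prod.cong) auto
  finally show ?thesis by simp
qed




lemma post_var_pos:
  assumes "0 < eps" "0 < tau j"
  shows "0 < post_var lam eps tau j"
  unfolding post_var_def using assms by (simp add: add_nonneg_pos)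

lemma post_bound:
  fixes lam th eta tau Y :: "nat \<Rightarrow> real" and eps t K :: real and m :: nat and R :: "real \<Rightarrow> bool"
  assumes eps: "0 < eps" and tau_pos: "\<And>j. 0 < tau j"
    and th_eta_l2: "summable (\<lambda>j. (th j - eta j)\<^sup>2)"
    and dpos: "\<And>j. j < m \<Longrightarrow> 0 < 1 - 2*t*post_var lam eps tau j"
    and R: "\<And>x. R x \<Longrightarrow> 0 \<le> t*(x - K)"
  shows "emeasure (sieve_posterior m lam eps tau eta Y)
     {v \<in> space (sieve_posterior m lam eps tau eta Y). R (sq_norm (\<lambda>j. v j - th j) - bias m th eta)}
    \<le> ennreal (exp (-t*K) * (\<Prod>j<m. exp (t*(post_mean lam eps tau eta Y j - th j)\<^sup>2/(1 - 2*t*post_var lam eps tau j))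
            / sqrt (1 - 2*t*post_var lam eps tau j)))"
proof -
  define pv where "pv = post_var lam eps tau"
  define pm where "pm = post_mean lam eps tau eta Y"
  define M where "M = (\<lambda>j. if j < m then density lborel (normal_density (pm j) (sqrt (pv j)))
        else return borel (eta j))"
  have Peq: "sieve_posterior m lam eps tau eta Y = PiM UNIV M"
    unfolding sieve_posterior_def M_def pv_def pm_def ..
  have pvpos: "0 < pv j" for j unfolding pv_def by (rule post_var_pos[OF eps tau_pos])
  have Mprob: "prob_space (M j)" for j
    unfolding M_def using pvpos[of j]
    by (auto intro!: prob_space_normal_density prob_space_return)
  have sqpv: "(sqrt (pv j))\<^sup>2 = pv j" for j using pvpos[of j] by simp
  interpret product_prob_space M UNIV
    by (simp add: product_prob_space_def product_prob_space_axioms_def product_sigma_finite_def Mprob prob_space_imp_sigma_finite)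
  have AE_tail: "AE v in PiM UNIV M. \<forall>j. m \<le> j \<longrightarrow> v j = eta j"
    unfolding AE_all_countable
  proof
    fix j
    show "AE v in PiM UNIV M. m \<le> j \<longrightarrow> v j = eta j"
    proof (cases "m \<le> j")
      case True
      have "AE x in M j. x = eta j" using True unfolding M_def by (simp add: AE_return)
      from AE_component[OF _ this] show ?thesis by simp
    next
      case False then show ?thesis by simp
    qed
  qed
  have sq_eq: "sq_norm (\<lambda>j. v j - th j) - bias m th eta = (\<Sum>j<m. (v j - th j)\<^sup>2)"
    if v: "\<forall>j. m \<le> j \<longrightarrow> v j = eta j" for v
  proof -
    have sh: "(\<lambda>j. (v (j+m) - th (j+m))\<^sup>2) = (\<lambda>j. (th (j+m) - eta (j+m))\<^sup>2)"
      using v by (auto simp: power2_commute)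
    have "summable (\<lambda>j. (th (j+m) - eta (j+m))\<^sup>2)"
      using th_eta_l2 by (subst summable_iff_shift) 
    then have "summable (\<lambda>j. (v (j+m) - th (j+m))\<^sup>2)"
      by (simp only: sh)
    then have "summable (\<lambda>j. (v j - th j)\<^sup>2)"
      by (subst summable_iff_shift[symmetric, of _ m])
    from suminf_split_initial_segment[OF this, of m] show ?thesis
      unfolding sq_norm_def bias_def sh by simp
  qed
  define A where "A = {v \<in> space (PiM UNIV M). R (sq_norm (\<lambda>j. v j - th j) - bias m th eta)}"
  define g where "g = (\<lambda>j x. ennreal (exp (t*(x - th j)\<^sup>2)))"
  have gmeas: "g j \<in> borel_measurable (M j)" for j
    unfolding g_def M_def by auto
  have "emeasure (PiM UNIV M) A \<le> ennreal (exp (-t*K)) * (\<Prod>j<m. ennreal (exp (t*(pm j - th j)\<^sup>2/(1 - 2*t*pv j))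
            / sqrt (1 - 2*t*pv j)))"
  proof (cases "A \<in> sets (PiM UNIV M)")
    case False then show ?thesis by (simp add: emeasure_notin_sets)
  next
    case True
    have "emeasure (PiM UNIV M) A = (\<integral>\<^sup>+v. indicator A v \<partial>PiM UNIV M)"
      using True by simp
    also have "\<dots> \<le> (\<integral>\<^sup>+v. ennreal (exp (-t*K)) * (\<Prod>j<m. g j (v j)) \<partial>PiM UNIV M)"
    proof (rule nn_integral_mono_AE)
      show "AE v in PiM UNIV M. indicator A v \<le> ennreal (exp (-t*K)) * (\<Prod>j<m. g j (v j))"
        using AE_tail
      proof eventually_elim
        case (elim v)
        have "ennreal (exp (-t*K)) * (\<Prod>j<m. g j (v j)) = ennreal (exp (-t*K) * (\<Prod>j<m. exp (t*(v j - th j)\<^sup>2)))"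
          unfolding g_def by (simp add: prod_ennreal ennreal_mult prod_nonneg)
        also have "\<dots> = ennreal (exp (t*((\<Sum>j<m. (v j - th j)\<^sup>2) - K)))"
          by (simp add: exp_sum[symmetric] mult_exp_exp sum_distrib_left algebra_simps)
        finally have eq: "ennreal (exp (-t*K)) * (\<Prod>j<m. g j (v j)) = ennreal (exp (t*((\<Sum>j<m. (v j - th j)\<^sup>2) - K)))" .
        show ?case
        proof (cases "v \<in> A")
          case True
          then have "R (\<Sum>j<m. (v j - th j)\<^sup>2)" unfolding A_def using sq_eq[OF elim] by simp
          then have "1 \<le> exp (t*((\<Sum>j<m. (v j - th j)\<^sup>2) - K))" using R by simp
          then show ?thesis using True eq by simp
        qed simp
      qed
    qed
    also have "\<dots> = ennreal (exp (-t*K)) * (\<integral>\<^sup>+v. (\<Prod>j<m. g j (v j)) \<partial>PiM UNIV M)"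
      using gmeas by (intro nn_integral_cmult) (auto intro!: borel_measurable_prod_ennreal)
    also have "(\<integral>\<^sup>+v. (\<Prod>j<m. g j (v j)) \<partial>PiM UNIV M) = (\<Prod>j<m. integral\<^sup>N (M j) (g j))"
      by (rule PiM_prod_nn[OF Mprob gmeas])
    also have "\<dots> = (\<Prod>j<m. ennreal (exp (t*(pm j - th j)\<^sup>2/(1 - 2*t*pv j)) / sqrt (1 - 2*t*pv j)))"
    proof (rule prod.cong[OF refl])
      fix j assume j: "j \<in> {..<m}"
      have d: "0 < 1 - 2*t*(sqrt (pv j))\<^sup>2" using dpos[of j] j sqpv[of j] by (simp add: pv_def)
      have "integral\<^sup>N (M j) (g j) = (\<integral>\<^sup>+x. ennreal (exp (t*(x - th j)\<^sup>2)) \<partial>density lborel (normal_density (pm j) (sqrt (pv j))))"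
        using j by (simp add: M_def g_def)
      also have "\<dots> = ennreal (exp (t*(pm j - th j)\<^sup>2/(1 - 2*t*(sqrt (pv j))\<^sup>2)) / sqrt (1 - 2*t*(sqrt (pv j))\<^sup>2))"
        by (rule nd_mgf) (use pvpos[of j] d in auto)
      finally show "integral\<^sup>N (M j) (g j) = ennreal (exp (t*(pm j - th j)\<^sup>2/(1 - 2*t*pv j)) / sqrt (1 - 2*t*pv j))"
        by (simp add: sqpv)
    qed
    finally show ?thesis .
  qed
  also have "\<dots> = ennreal (exp (-t*K) * (\<Prod>j<m. exp (t*(pm j - th j)\<^sup>2/(1 - 2*t*pv j))
            / sqrt (1 - 2*t*pv j)))"
  proof -
    have nn: "0 \<le> exp (t*(pm j - th j)\<^sup>2/(1 - 2*t*pv j)) / sqrt (1 - 2*t*pv j)" if "j \<in> {..<m}" for j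
      using dpos[of j] that by (simp add: pv_def)
    have p: "(\<Prod>j<m. ennreal (exp (t*(pm j - th j)\<^sup>2/(1 - 2*t*pv j)) / sqrt (1 - 2*t*pv j)))
       = ennreal (\<Prod>j<m. exp (t*(pm j - th j)\<^sup>2/(1 - 2*t*pv j)) / sqrt (1 - 2*t*pv j))"
      by (rule prod_ennreal) (rule nn)
    have q: "0 \<le> (\<Prod>j<m. exp (t*(pm j - th j)\<^sup>2/(1 - 2*t*pv j)) / sqrt (1 - 2*t*pv j))"
      by (rule prod_nonneg) (rule nn)
    show ?thesis
      unfolding p by (rule ennreal_mult[symmetric]) (auto intro: q)
  qed
  finally have fin: "emeasure (PiM UNIV M) A \<le> ennreal (exp (-t*K) * (\<Prod>j<m. exp (t*(pm j - th j)\<^sup>2/(1 - 2*t*pv j))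
            / sqrt (1 - 2*t*pv j)))" .
  show ?thesis using fin unfolding Peq A_def pv_def pm_def by simp
qed




lemma coord_mgf:
  fixes w a t d :: real
  assumes w: "w \<noteq> 0" and d: "0 < d" and e: "0 < d - 2*t*w\<^sup>2"
  shows "(\<integral>\<^sup>+x. ennreal (exp (t*(w*x+a)\<^sup>2/d) / sqrt d) \<partial>density lborel std_normal_density)
     = ennreal (exp (t*a\<^sup>2/(d - 2*t*w\<^sup>2)) / sqrt (d - 2*t*w\<^sup>2))"
proof -
  define k where "k = t*w\<^sup>2/d"
  define c where "c = -a/w"
  have k1: "1 - 2*k*1\<^sup>2 = (d - 2*t*w\<^sup>2)/d" unfolding k_def using d by (simp add: field_simps)
  have k1p: "0 < 1 - 2*k*1\<^sup>2" unfolding k1 using d e by simp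
  have pt: "exp (t*(w*x+a)\<^sup>2/d) / sqrt d = (1/sqrt d) * exp (k*(x-c)\<^sup>2)" for x
  proof -
    have "t*(w*x+a)\<^sup>2/d = k*(x-c)\<^sup>2" unfolding k_def c_def using w d
      by (simp add: field_simps power2_eq_square)
    then show ?thesis by simp
  qed
  have "(\<integral>\<^sup>+x. ennreal (exp (t*(w*x+a)\<^sup>2/d) / sqrt d) \<partial>density lborel std_normal_density)
      = (\<integral>\<^sup>+x. ennreal (1/sqrt d) * ennreal (exp (k*(x-c)\<^sup>2)) \<partial>density lborel std_normal_density)"
    unfolding pt using d by (intro nn_integral_cong) (subst ennreal_mult[symmetric], auto)
  also have "\<dots> = ennreal (1/sqrt d) * (\<integral>\<^sup>+x. ennreal (exp (k*(x-c)\<^sup>2)) \<partial>density lborel std_normal_density)"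
    by (rule nn_integral_cmult) auto
  also have "(\<integral>\<^sup>+x. ennreal (exp (k*(x-c)\<^sup>2)) \<partial>density lborel std_normal_density)
       = ennreal (exp (k*(0-c)\<^sup>2/(1 - 2*k*1\<^sup>2)) / sqrt (1 - 2*k*1\<^sup>2))"
    by (rule nd_mgf) (use k1p in auto)
  also have "ennreal (1/sqrt d) * ennreal (exp (k*(0-c)\<^sup>2/(1 - 2*k*1\<^sup>2)) / sqrt (1 - 2*k*1\<^sup>2))
     = ennreal (1/sqrt d * (exp (k*(0-c)\<^sup>2/(1 - 2*k*1\<^sup>2)) / sqrt (1 - 2*k*1\<^sup>2)))"
    using d k1p by (subst ennreal_mult[symmetric]) auto
  also have "1/sqrt d * (exp (k*(0-c)\<^sup>2/(1 - 2*k*1\<^sup>2)) / sqrt (1 - 2*k*1\<^sup>2)) = exp (t*a\<^sup>2/(d - 2*t*w\<^sup>2)) / sqrt (d - 2*t*w\<^sup>2)"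
  proof -
    have ex: "k*(0-c)\<^sup>2/(1 - 2*k*1\<^sup>2) = t*a\<^sup>2/(d - 2*t*w\<^sup>2)"
      unfolding k1 unfolding k_def c_def using w d e by (simp add: field_simps power2_eq_square)
    have sq: "sqrt (1 - 2*k*1\<^sup>2) = sqrt (d - 2*t*w\<^sup>2) / sqrt d"
      unfolding k1 by (simp add: real_sqrt_divide)
    show ?thesis unfolding ex sq using d e by simp
  qed
  finally show ?thesis .
qed

lemma pm_affine:
  fixes lam tau eta th eps x :: real
  assumes eps: "0 < eps" and tau: "0 < tau"
  shows "inverse (lam\<^sup>2/eps + inverse tau) * (eta/tau + lam*(lam*th + sqrt eps*x)/eps) - th
     = (inverse (lam\<^sup>2/eps + inverse tau) * lam / sqrt eps) * x + inverse (lam\<^sup>2/eps + inverse tau)*(eta - th)/tau"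
proof -
  define p where "p = inverse (lam\<^sup>2/eps + inverse tau)"
  define r where "r = sqrt eps"
  have r: "0 < r" "eps = r\<^sup>2" unfolding r_def using eps by auto
  have D: "0 < lam\<^sup>2/r\<^sup>2 + 1/tau" using r tau by (simp add: add_nonneg_pos)
  have pD: "p*(lam\<^sup>2/r\<^sup>2 + 1/tau) = 1" unfolding p_def r(2) using D by (simp add: inverse_eq_divide)
  have "(p * (eta/tau + lam*(lam*th + r*x)/r\<^sup>2) - th) - ((p * lam / r) * x + p*(eta - th)/tau)
        = th * (p*(lam\<^sup>2/r\<^sup>2 + 1/tau) - 1)"
    using r tau by (simp add: field_simps power2_eq_square)
  also have "\<dots> = 0" using pD by simp
  finally show ?thesis unfolding p_def[symmetric] r_def[symmetric] unfolding r(2)[symmetric] by simp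
qed

lemma data_bound:
  fixes lam th eta tau :: "nat \<Rightarrow> real" and eps t :: real and m :: nat
  assumes lam_nz: "\<And>j. lam j \<noteq> 0" and eps: "0 < eps" and tau_pos: "\<And>j. 0 < tau j"
    and dpos: "\<And>j. j < m \<Longrightarrow> 0 < 1 - 2*t*post_var lam eps tau j"
    and epos: "\<And>j. j < m \<Longrightarrow> 0 < 1 - 2*t*(post_var lam eps tau j + (post_var lam eps tau j)\<^sup>2 * (lam j)\<^sup>2/eps)"
  shows "(\<integral>\<^sup>+Y. ennreal (\<Prod>j<m. exp (t*(post_mean lam eps tau eta Y j - th j)\<^sup>2/(1 - 2*t*post_var lam eps tau j))
            / sqrt (1 - 2*t*post_var lam eps tau j)) \<partial>data_law lam eps th)
     = ennreal (\<Prod>j<m. exp (t*(post_var lam eps tau j * (eta j - th j)/tau j)\<^sup>2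
          /(1 - 2*t*(post_var lam eps tau j + (post_var lam eps tau j)\<^sup>2 * (lam j)\<^sup>2/eps)))
          / sqrt (1 - 2*t*(post_var lam eps tau j + (post_var lam eps tau j)\<^sup>2 * (lam j)\<^sup>2/eps)))"
proof -
  define pv where "pv = post_var lam eps tau"
  define d where "d = (\<lambda>j. 1 - 2*t*pv j)"
  define e where "e = (\<lambda>j. 1 - 2*t*(pv j + (pv j)\<^sup>2 * (lam j)\<^sup>2/eps))"
  define G where "G = (\<lambda>j y. ennreal (exp (t*(pv j*(eta j/tau j + lam j*y/eps) - th j)\<^sup>2/d j) / sqrt (d j)))"
  define N where "N = (\<lambda>_::nat. density lborel std_normal_density)"
  define T where "T = (\<lambda>(xi::nat\<Rightarrow>real) j. lam j * th j + sqrt eps * xi j)"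
  have pvpos: "0 < pv j" for j unfolding pv_def post_var_def using eps tau_pos[of j] by (simp add: add_nonneg_pos)
  have d0: "j < m \<Longrightarrow> 0 < d j" for j using dpos unfolding d_def pv_def by simp
  have e0: "j < m \<Longrightarrow> 0 < e j" for j using epos unfolding e_def pv_def by simp
  have Nprob: "prob_space (N j)" for j unfolding N_def by (rule prob_space_normal_density) simp
  have Tmeas: "T \<in> measurable (PiM UNIV N) (PiM UNIV (\<lambda>_. borel))"
    unfolding T_def N_def
    apply (rule measurable_PiM_single')
    subgoal by measurable
    subgoal by auto
    done
  have Gmeas: "G j \<in> borel_measurable borel" for j unfolding G_def by measurable
  have "(\<integral>\<^sup>+Y. ennreal (\<Prod>j<m. exp (t*(post_mean lam eps tau eta Y j - th j)\<^sup>2/(1 - 2*t*post_var lam eps tau j))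
            / sqrt (1 - 2*t*post_var lam eps tau j)) \<partial>data_law lam eps th)
      = (\<integral>\<^sup>+Y. (\<Prod>j<m. G j (Y j)) \<partial>distr (PiM UNIV N) (PiM UNIV (\<lambda>_. borel)) T)"
    unfolding data_law_def N_def[symmetric] T_def[symmetric]
  proof (rule nn_integral_cong)
    fix Y :: "nat \<Rightarrow> real"
    show "ennreal (\<Prod>j<m. exp (t*(post_mean lam eps tau eta Y j - th j)\<^sup>2/(1 - 2*t*post_var lam eps tau j))
            / sqrt (1 - 2*t*post_var lam eps tau j)) = (\<Prod>j<m. G j (Y j))" (is ?thesis)
    proof -
      have sq0: "\<And>i. i < m \<Longrightarrow> 0 \<le> sqrt (1 - 2*t*post_var lam eps tau i)" using dpos by (simp add: less_imp_le)
      show ?thesis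
      unfolding G_def
      by (subst prod_ennreal[symmetric]) (auto simp: d0 d_def pv_def post_mean_def intro!: prod.cong divide_nonneg_nonneg sq0)
    qed
  qed
  also have "\<dots> = (\<integral>\<^sup>+xi. (\<Prod>j<m. G j (T xi j)) \<partial>PiM UNIV N)"
    by (rule nn_integral_distr[OF Tmeas]) (use Gmeas in \<open>auto intro!: borel_measurable_prod_ennreal\<close>)
  also have "\<dots> = (\<Prod>j<m. \<integral>\<^sup>+x. G j (lam j * th j + sqrt eps * x) \<partial>N j)"
    unfolding T_def by (rule PiM_prod_nn[OF Nprob]) (use Gmeas in \<open>auto simp: N_def\<close>)
  also have "\<dots> = (\<Prod>j<m. ennreal (exp (t*(pv j * (eta j - th j)/tau j)\<^sup>2/e j) / sqrt (e j)))"
  proof (rule prod.cong[OF refl])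
    fix j assume j: "j \<in> {..<m}"
    define w where "w = pv j * lam j / sqrt eps"
    define a where "a = pv j * (eta j - th j)/tau j"
    have w0: "w \<noteq> 0" unfolding w_def using pvpos[of j] lam_nz[of j] eps by simp
    have ed: "d j - 2*t*w\<^sup>2 = e j" unfolding d_def e_def w_def using eps
      by (simp add: power_divide power_mult_distrib algebra_simps)
    have aff: "pv j*(eta j/tau j + lam j*(lam j * th j + sqrt eps * x)/eps) - th j = w*x + a" for x
      unfolding w_def a_def pv_def post_var_def using pm_affine[OF eps tau_pos[of j], of "lam j" "eta j" "th j" x]
      by simp
    have "(\<integral>\<^sup>+x. G j (lam j * th j + sqrt eps * x) \<partial>N j)
        = (\<integral>\<^sup>+x. ennreal (exp (t*(w*x+a)\<^sup>2/d j) / sqrt (d j)) \<partial>density lborel std_normal_density)"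
      unfolding G_def N_def aff ..
    also have "\<dots> = ennreal (exp (t*a\<^sup>2/(d j - 2*t*w\<^sup>2)) / sqrt (d j - 2*t*w\<^sup>2))"
      by (rule coord_mgf[OF w0]) (use d0 e0 j ed in auto)
    finally show "(\<integral>\<^sup>+x. G j (lam j * th j + sqrt eps * x) \<partial>N j) = ennreal (exp (t*(pv j * (eta j - th j)/tau j)\<^sup>2/e j) / sqrt (e j))"
      unfolding ed a_def .
  qed
  also have "\<dots> = ennreal (\<Prod>j<m. exp (t*(pv j * (eta j - th j)/tau j)\<^sup>2/e j) / sqrt (e j))"
    by (rule prod_ennreal) (use e0 in \<open>auto intro!: divide_nonneg_nonneg less_imp_le\<close>)
  finally show ?thesis unfolding e_def pv_def .
qed




lemma combined:
  fixes lam th eta tau :: "nat \<Rightarrow> real" and eps t K :: real and m :: nat and R :: "real \<Rightarrow> bool"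
  assumes lam_nz: "\<And>j. lam j \<noteq> 0" and eps: "0 < eps" and tau_pos: "\<And>j. 0 < tau j"
    and th_eta_l2: "summable (\<lambda>j. (th j - eta j)\<^sup>2)"
    and dpos: "\<And>j. j < m \<Longrightarrow> 0 < 1 - 2*t*post_var lam eps tau j"
    and epos: "\<And>j. j < m \<Longrightarrow> 0 < 1 - 2*t*(post_var lam eps tau j + (post_var lam eps tau j)\<^sup>2 * (lam j)\<^sup>2/eps)"
    and R: "\<And>x. R x \<Longrightarrow> 0 \<le> t*(x - K)"
  shows "(\<integral>\<^sup>+ Y. emeasure (sieve_posterior m lam eps tau eta Y)
     {v \<in> space (sieve_posterior m lam eps tau eta Y). R (sq_norm (\<lambda>j. v j - th j) - bias m th eta)}
     \<partial>data_law lam eps th)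
   \<le> ennreal (exp (-t*K) * (\<Prod>j<m. exp (t*(post_var lam eps tau j * (eta j - th j)/tau j)\<^sup>2
          /(1 - 2*t*(post_var lam eps tau j + (post_var lam eps tau j)\<^sup>2 * (lam j)\<^sup>2/eps)))
          / sqrt (1 - 2*t*(post_var lam eps tau j + (post_var lam eps tau j)\<^sup>2 * (lam j)\<^sup>2/eps))))"
proof -
  define F where "F = (\<lambda>Y. ennreal (\<Prod>j<m. exp (t*(post_mean lam eps tau eta Y j - th j)\<^sup>2/(1 - 2*t*post_var lam eps tau j))
            / sqrt (1 - 2*t*post_var lam eps tau j)))"
  have Fmeas: "F \<in> borel_measurable (data_law lam eps th)"
    unfolding F_def data_law_def post_mean_def by measurable
  have nn: "0 \<le> (\<Prod>j<m. exp (t*(post_mean lam eps tau eta Y j - th j)\<^sup>2/(1 - 2*t*post_var lam eps tau j))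
            / sqrt (1 - 2*t*post_var lam eps tau j))" for Y
    by (rule prod_nonneg) (use dpos in \<open>auto intro!: divide_nonneg_nonneg less_imp_le\<close>)
  have "(\<integral>\<^sup>+ Y. emeasure (sieve_posterior m lam eps tau eta Y)
     {v \<in> space (sieve_posterior m lam eps tau eta Y). R (sq_norm (\<lambda>j. v j - th j) - bias m th eta)}
     \<partial>data_law lam eps th) \<le> (\<integral>\<^sup>+ Y. ennreal (exp (-t*K)) * F Y \<partial>data_law lam eps th)"
  proof (rule nn_integral_mono)
    fix Y
    show "emeasure (sieve_posterior m lam eps tau eta Y)
     {v \<in> space (sieve_posterior m lam eps tau eta Y). R (sq_norm (\<lambda>j. v j - th j) - bias m th eta)}
      \<le> ennreal (exp (-t*K)) * F Y"
      unfolding F_def using post_bound[where Y=Y and m=m, OF eps tau_pos th_eta_l2 dpos R] nn[of Y]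
      by (simp add: ennreal_mult)
  qed
  also have "\<dots> = ennreal (exp (-t*K)) * (\<integral>\<^sup>+ Y. F Y \<partial>data_law lam eps th)"
    by (rule nn_integral_cmult[OF Fmeas])
  also have "(\<integral>\<^sup>+ Y. F Y \<partial>data_law lam eps th) = ennreal (\<Prod>j<m. exp (t*(post_var lam eps tau j * (eta j - th j)/tau j)\<^sup>2
          /(1 - 2*t*(post_var lam eps tau j + (post_var lam eps tau j)\<^sup>2 * (lam j)\<^sup>2/eps)))
          / sqrt (1 - 2*t*(post_var lam eps tau j + (post_var lam eps tau j)\<^sup>2 * (lam j)\<^sup>2/eps)))"
    unfolding F_def by (rule data_bound[OF lam_nz eps tau_pos dpos epos])
  also have "ennreal (exp (-t*K)) * \<dots> = ennreal (exp (-t*K) * (\<Prod>j<m. exp (t*(post_var lam eps tau j * (eta j - th j)/tau j)\<^sup>2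
          /(1 - 2*t*(post_var lam eps tau j + (post_var lam eps tau j)\<^sup>2 * (lam j)\<^sup>2/eps)))
          / sqrt (1 - 2*t*(post_var lam eps tau j + (post_var lam eps tau j)\<^sup>2 * (lam j)\<^sup>2/eps))))"
  proof (rule ennreal_mult[symmetric])
    show "0 \<le> (\<Prod>j<m. exp (t*(post_var lam eps tau j * (eta j - th j)/tau j)\<^sup>2
          /(1 - 2*t*(post_var lam eps tau j + (post_var lam eps tau j)\<^sup>2 * (lam j)\<^sup>2/eps)))
          / sqrt (1 - 2*t*(post_var lam eps tau j + (post_var lam eps tau j)\<^sup>2 * (lam j)\<^sup>2/eps)))"
    proof (rule prod_nonneg)
      fix j assume "j \<in> {..<m}"
      then have "0 \<le> 1 - 2*t*(post_var lam eps tau j + (post_var lam eps tau j)\<^sup>2 * (lam j)\<^sup>2/eps)"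
        using epos[of j] by simp
      then show "0 \<le> exp (t*(post_var lam eps tau j * (eta j - th j)/tau j)\<^sup>2
          /(1 - 2*t*(post_var lam eps tau j + (post_var lam eps tau j)\<^sup>2 * (lam j)\<^sup>2/eps)))
          / sqrt (1 - 2*t*(post_var lam eps tau j + (post_var lam eps tau j)\<^sup>2 * (lam j)\<^sup>2/eps))"
        by simp
    qed
  qed simp
  finally show ?thesis .
qed




lemma fac_up:
  fixes x t y :: real
  assumes "0 \<le> x" "x \<le> 1/2" "0 \<le> t" "0 \<le> y"
  shows "exp (t*y/(1-x)) / sqrt (1-x) \<le> exp (2*t*y + x)"
proof -
  have e: "1/2 \<le> 1 - x" "1 - x \<le> 1" using assms by auto
  have a: "t*y/(1-x) \<le> 2*t*y"
  proof -
    have "t*y/(1-x) \<le> t*y/(1/2)" using e assms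
      by (intro divide_left_mono) (auto intro: mult_nonneg_nonneg)
    then show ?thesis by simp
  qed
  have b: "1 \<le> sqrt (1-x) * exp x"
  proof -
    have "1 + 2*x \<le> exp (2*x)" by (rule exp_ge_add_one_self)
    then have "(1-x)*(1+2*x) \<le> (1-x) * exp (2*x)" using e by (intro mult_left_mono) auto
    moreover have "1 \<le> (1-x)*(1+2*x)"
    proof -
      have "0 \<le> x*(1-2*x)" using assms by (intro mult_nonneg_nonneg) auto
      then show ?thesis by (simp add: algebra_simps)
    qed
    ultimately have "1 \<le> (1-x) * exp (2*x)" by linarith
    also have "(1-x) * exp (2*x) = (sqrt (1-x) * exp x)\<^sup>2"
    proof -
      have h1: "exp (2*x) = (exp x)\<^sup>2" by (metis mult_exp_exp mult_2 power2_eq_square)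
      have h2: "(sqrt (1-x))\<^sup>2 = 1-x" using e by simp
      show ?thesis unfolding power_mult_distrib h1 h2 ..
    qed
    finally have "1 \<le> (sqrt (1-x) * exp x)\<^sup>2" .
    then show ?thesis
      by (metis abs_of_nonneg exp_ge_zero mult_nonneg_nonneg one_le_power real_sqrt_ge_zero real_sqrt_le_iff real_sqrt_one real_sqrt_abs e(1) le_numeral_extra(4) order.trans zero_le_divide_1_iff zero_le_numeral)
  qed
  have sp: "0 < sqrt (1-x)" using e by simp
  have "exp (t*y/(1-x)) / sqrt (1-x) \<le> exp (2*t*y) / sqrt (1-x)"
    using a sp by (intro divide_right_mono) auto
  also have "\<dots> \<le> exp (2*t*y) * exp x"
  proof -
    have b': "1 \<le> exp x * sqrt (1-x)" using b by (simp add: mult.commute)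
    show ?thesis using b' sp by (simp add: divide_le_eq mult.assoc)
  qed
  also have "\<dots> = exp (2*t*y + x)" by (simp add: mult_exp_exp)
  finally show ?thesis .
qed

lemma fac_low:
  fixes x z t y :: real
  assumes "0 \<le> x" "x \<le> 1" "x \<le> z" "t \<le> 0" "0 \<le> y"
  shows "exp (t*y/(1+z)) / sqrt (1+z) \<le> exp (-(x - x\<^sup>2)/2)"
proof -
  have z: "0 \<le> z" using assms by simp
  have a: "exp (t*y/(1+z)) \<le> 1" using assms z
    by (simp add: divide_nonpos_pos mult_nonpos_nonneg)
  have "x - x\<^sup>2 \<le> ln (1+x)" by (rule ln_one_plus_pos_lower_bound) (use assms in auto)
  then have "exp (x - x\<^sup>2) \<le> 1 + x" using assms
    by (metis add_nonneg_pos exp_le_cancel_iff exp_ln zero_less_one add.commute)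
  also have "\<dots> \<le> 1 + z" using assms by simp
  finally have b: "exp (x - x\<^sup>2) \<le> 1 + z" .
  have "exp ((x - x\<^sup>2)/2) = sqrt (exp (x - x\<^sup>2))"
    by (simp add: real_sqrt_eq_iff exp_ge_zero power2_eq_square mult_exp_exp flip: real_sqrt_unique)
  also have "\<dots> \<le> sqrt (1+z)" using b by simp
  finally have c: "exp ((x - x\<^sup>2)/2) \<le> sqrt (1+z)" .
  have sp: "0 < sqrt (1+z)" using z by simp
  have "exp (t*y/(1+z)) / sqrt (1+z) \<le> 1 / sqrt (1+z)"
    using a sp by (intro divide_right_mono) auto
  also have "\<dots> \<le> 1 / exp ((x - x\<^sup>2)/2)"
    using c sp by (intro divide_left_mono) (auto intro: mult_pos_pos)
  also have "\<dots> = exp (-(x - x\<^sup>2)/2)"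
  proof -
    have "exp (-(x - x\<^sup>2)/2) = exp (-((x - x\<^sup>2)/2))" by (simp add: field_simps)
    also have "\<dots> = inverse (exp ((x - x\<^sup>2)/2))" by (rule exp_minus)
    also have "\<dots> = 1 / exp ((x - x\<^sup>2)/2)" by (simp add: inverse_eq_divide)
    finally show ?thesis by simp
  qed
  finally show ?thesis .
qed

lemma prod_le_exp_sum:
  fixes f g :: "nat \<Rightarrow> real"
  assumes "\<And>j. j \<in> A \<Longrightarrow> 0 \<le> f j" "\<And>j. j \<in> A \<Longrightarrow> f j \<le> exp (g j)"
  shows "prod f A \<le> exp (sum g A)"
proof (cases "finite A")
  case True
  have "prod f A \<le> (\<Prod>j\<in>A. exp (g j))" using assms by (intro prod_mono) auto
  also have "\<dots> = exp (sum g A)" using True by (simp add: exp_sum)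
  finally show ?thesis .
qed simp





theorem mainTheorem2:
  fixes lam th eta tau :: "nat \<Rightarrow> real" and eps c :: real and m :: nat
  assumes lam_bdd: "bounded (range lam)"
    and lam_nz: "\<And>j. lam j \<noteq> 0"
    and eps: "0 < eps" "eps < 1"
    and th_l2: "summable (\<lambda>j. (th j)\<^sup>2)"
    and th_eta_l2: "summable (\<lambda>j. (th j - eta j)\<^sup>2)"
    and tau_pos: "\<And>j. 0 < tau j"
    and c: "0 < c" "c < 1/5"
  shows
   "(\<integral>\<^sup>+ Y. emeasure (sieve_posterior m lam eps tau eta Y)
        {v \<in> space (sieve_posterior m lam eps tau eta Y).
           sq_norm (\<lambda>j. v j - th j) > bias m th eta + 3 * sigma_bar m lam eps tau
              + 3/2 * real m * sigma_max m lam eps tau + 4 * r_term m lam eps tau eta th}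
      \<partial>data_law lam eps th) \<le> ennreal (2 * exp (- real m / 36))
    \<and>
    (\<integral>\<^sup>+ Y. emeasure (sieve_posterior m lam eps tau eta Y)
        {v \<in> space (sieve_posterior m lam eps tau eta Y).
           sq_norm (\<lambda>j. v j - th j) < bias m th eta + sigma_bar m lam eps tau
              - 4 * c * (real m * sigma_max m lam eps tau + r_term m lam eps tau eta th)}
      \<partial>data_law lam eps th) \<le> ennreal (2 * exp (- c\<^sup>2 * real m / 2))"
proof -
  define pv where "pv = post_var lam eps tau"
  define qv where "qv = (\<lambda>j. pv j + (pv j)\<^sup>2 * (lam j)\<^sup>2/eps)"
  define a where "a = (\<lambda>j. pv j * (eta j - th j)/tau j)"
  define S where "S = sigma_max m lam eps tau"
  define bsig where "bsig = sigma_bar m lam eps tau"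
  define r where "r = r_term m lam eps tau eta th"
  define B where "B = bias m th eta"
  define Post where "Post = (\<lambda>Y. sieve_posterior m lam eps tau eta Y)"
  define D where "D = data_law lam eps th"
  have pvpos: "0 < pv j" for j unfolding pv_def by (rule post_var_pos[OF eps(1) tau_pos])
  have pvlam: "pv j * (lam j)\<^sup>2/eps \<le> 1" for j
  proof -
    define L where "L = (lam j)\<^sup>2/eps"
    have L0: "0 \<le> L" unfolding L_def using eps by simp
    have t0: "0 < inverse (tau j)" using tau_pos[of j] by simp
    have "pv j * (lam j)\<^sup>2/eps = L / (L + inverse (tau j))"
      unfolding pv_def post_var_def L_def by (simp add: divide_inverse_commute)
    also have "\<dots> \<le> 1"
    proof -
      have "0 < L + inverse (tau j)" using L0 t0 by (rule add_nonneg_pos)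
      then show ?thesis using t0 by (simp add: divide_le_eq)
    qed
    finally show ?thesis .
  qed
  have qv_ge: "pv j \<le> qv j" for j unfolding qv_def using eps by simp
  have qv_le: "qv j \<le> 2 * pv j" for j
  proof -
    have "(pv j)\<^sup>2 * (lam j)\<^sup>2/eps = pv j * (pv j * (lam j)\<^sup>2/eps)" by (simp add: power2_eq_square)
    also have "\<dots> \<le> pv j * 1" using pvlam[of j] pvpos[of j] by (intro mult_left_mono) auto
    finally show ?thesis unfolding qv_def by simp
  qed
  have bsig_eq: "bsig = (\<Sum>j<m. pv j)" unfolding bsig_def sigma_bar_def pv_def ..
  have r_eq: "r = (\<Sum>j<m. (a j)\<^sup>2)" unfolding r_def r_term_def a_def pv_def
    by (intro sum.cong) (auto simp: power_divide power_mult_distrib power2_commute[of "eta _"])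
  have comb: "(\<integral>\<^sup>+ Y. emeasure (Post Y) {w \<in> space (Post Y). R (sq_norm (\<lambda>j. w j - th j) - B)} \<partial>D)
      \<le> ennreal (exp (-t*K) * (\<Prod>j<m. exp (t*(a j)\<^sup>2/(1 - 2*t*qv j)) / sqrt (1 - 2*t*qv j)))"
    if "\<And>j. j < m \<Longrightarrow> 0 < 1 - 2*t*pv j" "\<And>j. j < m \<Longrightarrow> 0 < 1 - 2*t*qv j"
       "\<And>x. R x \<Longrightarrow> 0 \<le> t*(x - K)" for t K R
    using combined[where t=t and R=R and K=K and m=m and eta=eta, OF lam_nz eps(1) tau_pos th_eta_l2] that
    unfolding Post_def D_def B_def a_def qv_def pv_def by simp
  have setU: "{w \<in> space (Post Y). sq_norm (\<lambda>j. w j - th j) > B + 3*bsig + 3/2*real m*S + 4*r}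
     = {w \<in> space (Post Y). (\<lambda>x. x > 3*bsig + 3/2*real m*S + 4*r) (sq_norm (\<lambda>j. w j - th j) - B)}" for Y
    by auto
  have setL: "{w \<in> space (Post Y). sq_norm (\<lambda>j. w j - th j) < B + bsig - 4*c*(real m*S + r)}
     = {w \<in> space (Post Y). (\<lambda>x. x < bsig - 4*c*(real m*S + r)) (sq_norm (\<lambda>j. w j - th j) - B)}" for Y
    by auto
  have U: "(\<integral>\<^sup>+ Y. emeasure (Post Y) {w \<in> space (Post Y). sq_norm (\<lambda>j. w j - th j) > B + 3*bsig + 3/2*real m*S + 4*r} \<partial>D)
      \<le> ennreal (2 * exp (- real m / 36))"
  proof (cases "m = 0")
    case True
    have "(\<integral>\<^sup>+ Y. emeasure (Post Y) {w \<in> space (Post Y). sq_norm (\<lambda>j. w j - th j) > B + 3*bsig + 3/2*real m*S + 4*r} \<partial>D)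
       \<le> ennreal (exp (-1*(3*bsig + 3/2*real m*S + 4*r)) * (\<Prod>j<m. exp (1*(a j)\<^sup>2/(1 - 2*1*qv j)) / sqrt (1 - 2*1*qv j)))"
      unfolding setU by (rule comb) (use True in auto)
    also have "\<dots> = 1" using True by (simp add: bsig_eq r_eq)
    also have "1 \<le> ennreal (2 * exp (- real m / 36))" using True by simp
    finally show ?thesis .
  next
    case False
    then have m0: "0 < m" by simp
    have Sin: "S \<in> pv ` {..<m}" unfolding S_def sigma_max_def pv_def[symmetric]
      using m0 by (intro Max_in) auto
    have S0: "0 < S" using Sin pvpos by auto
    have pvS: "pv j \<le> S" if "j < m" for j unfolding S_def sigma_max_def pv_def[symmetric]
      using that by (intro Max_ge) auto
    define t where "t = 1/(8*S)"
    have t0: "0 < t" unfolding t_def using S0 by simp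
    have tpv: "t * pv j \<le> 1/8" if "j < m" for j
      unfolding t_def using pvS[OF that] S0 by (simp add: divide_le_eq)
    have x0: "0 \<le> 2*t*qv j" for j using t0 pvpos[of j] qv_ge[of j] by simp
    have x1: "2*t*qv j \<le> 4*t*pv j" for j using t0 qv_le[of j] by simp
    have "(\<integral>\<^sup>+ Y. emeasure (Post Y) {w \<in> space (Post Y). sq_norm (\<lambda>j. w j - th j) > B + 3*bsig + 3/2*real m*S + 4*r} \<partial>D)
       \<le> ennreal (exp (-t*(3*bsig + 3/2*real m*S + 4*r)) * (\<Prod>j<m. exp (t*(a j)\<^sup>2/(1 - 2*t*qv j)) / sqrt (1 - 2*t*qv j)))"
      unfolding setU
    proof (rule comb)
      fix j assume j: "j < m"
      show "0 < 1 - 2*t*pv j" using tpv[OF j] by simp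
      show "0 < 1 - 2*t*qv j" using tpv[OF j] x1[of j] by simp
    next
      fix x assume "3*bsig + 3/2*real m*S + 4*r < x"
      then show "0 \<le> t*(x - (3*bsig + 3/2*real m*S + 4*r))" using t0 by simp
    qed
    also have "exp (-t*(3*bsig + 3/2*real m*S + 4*r)) * (\<Prod>j<m. exp (t*(a j)\<^sup>2/(1 - 2*t*qv j)) / sqrt (1 - 2*t*qv j))
       \<le> exp (-t*(3*bsig + 3/2*real m*S + 4*r)) * exp (\<Sum>j<m. 2*t*(a j)\<^sup>2 + 4*t*pv j)"
    proof (rule mult_left_mono[OF prod_le_exp_sum])
      fix j assume "j \<in> {..<m}"
      then have j: "j < m" by simp
      have e: "0 < 1 - 2*t*qv j" using tpv[OF j] x1[of j] by simp
      then show "0 \<le> exp (t*(a j)\<^sup>2/(1 - 2*t*qv j)) / sqrt (1 - 2*t*qv j)" by simp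
      have "exp (t*(a j)\<^sup>2/(1 - 2*t*qv j)) / sqrt (1 - 2*t*qv j) \<le> exp (2*t*(a j)\<^sup>2 + 2*t*qv j)"
      proof -
        have tq: "t * qv j \<le> 2*(t*pv j)" using mult_left_mono[OF qv_le[of j], of t] t0 by (simp add: algebra_simps)
        show ?thesis
          apply (rule fac_up)
          apply (use x0[of j] in linarith)
          apply (use tq tpv[OF j] in linarith)
          apply (use t0 in linarith)
          apply simp
          done
      qed
      also have "\<dots> \<le> exp (2*t*(a j)\<^sup>2 + 4*t*pv j)" using x1[of j] by simp
      finally show "exp (t*(a j)\<^sup>2/(1 - 2*t*qv j)) / sqrt (1 - 2*t*qv j) \<le> exp (2*t*(a j)\<^sup>2 + 4*t*pv j)" .
    qed simp
    also have "\<dots> = exp (-t*(3*bsig + 3/2*real m*S + 4*r) + (2*t*r + 4*t*bsig))"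
      by (simp add: mult_exp_exp sum.distrib sum_distrib_left[symmetric] bsig_eq r_eq)
    also have "\<dots> \<le> exp (- real m / 36)"
    proof -
      have sbm: "bsig \<le> real m * S" unfolding bsig_eq
        using sum_bounded_above[of "{..<m}" pv S] pvS by simp
      have r0: "0 \<le> r" unfolding r_eq by (simp add: sum_nonneg)
      have "-t*(3*bsig + 3/2*real m*S + 4*r) + (2*t*r + 4*t*bsig) = t*(bsig - 3/2*real m*S - 2*r)"
        by (simp add: algebra_simps)
      also have "\<dots> \<le> t*(- 1/2*real m*S)" using sbm r0 t0 by (intro mult_left_mono) auto
      also have "\<dots> = - real m / 16" unfolding t_def using S0 by simp
      also have "\<dots> \<le> - real m / 36" by simp
      finally show ?thesis by simp
    qed
    also have "\<dots> \<le> 2 * exp (- real m / 36)" by simp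
    finally show ?thesis by (simp add: ennreal_leI)
  qed
  have L: "(\<integral>\<^sup>+ Y. emeasure (Post Y) {w \<in> space (Post Y). sq_norm (\<lambda>j. w j - th j) < B + bsig - 4*c*(real m*S + r)} \<partial>D)
      \<le> ennreal (2 * exp (- c\<^sup>2 * real m / 2))"
  proof (cases "m = 0")
    case True
    have "(\<integral>\<^sup>+ Y. emeasure (Post Y) {w \<in> space (Post Y). sq_norm (\<lambda>j. w j - th j) < B + bsig - 4*c*(real m*S + r)} \<partial>D)
       \<le> ennreal (exp (-(-1)*(bsig - 4*c*(real m*S + r))) * (\<Prod>j<m. exp ((-1)*(a j)\<^sup>2/(1 - 2*(-1)*qv j)) / sqrt (1 - 2*(-1)*qv j)))"
      unfolding setL by (rule comb) (use True in auto)
    also have "\<dots> = 1" using True by (simp add: bsig_eq r_eq)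
    also have "1 \<le> ennreal (2 * exp (- c\<^sup>2 * real m / 2))" using True by simp
    finally show ?thesis .
  next
    case False
    then have m0: "0 < m" by simp
    have Sin: "S \<in> pv ` {..<m}" unfolding S_def sigma_max_def pv_def[symmetric]
      using m0 by (intro Max_in) auto
    have S0: "0 < S" using Sin pvpos by auto
    have pvS: "pv j \<le> S" if "j < m" for j unfolding S_def sigma_max_def pv_def[symmetric]
      using that by (intro Max_ge) auto
    define t where "t = -(c/S)"
    define u where "u = c/S"
    have u0: "0 < u" unfolding u_def using S0 c by simp
    have tu: "t = -u" unfolding t_def u_def ..
    have upv: "u * pv j \<le> c" if "j < m" for j
      unfolding u_def using pvS[OF that] S0 c by (simp add: divide_le_eq mult_left_mono)
    have upv0: "0 \<le> u * pv j" for j using u0 pvpos[of j] by simp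
    have uq: "u * pv j \<le> u * qv j" for j using u0 qv_ge[of j] by (intro mult_left_mono) auto
    define KL where "KL = bsig - 4*c*(real m*S + r)"
    have "(\<integral>\<^sup>+ Y. emeasure (Post Y) {w \<in> space (Post Y). sq_norm (\<lambda>j. w j - th j) < B + bsig - 4*c*(real m*S + r)} \<partial>D)
       \<le> ennreal (exp (-t*KL) * (\<Prod>j<m. exp (t*(a j)\<^sup>2/(1 - 2*t*qv j)) / sqrt (1 - 2*t*qv j)))"
      unfolding setL KL_def
    proof (rule comb)
      fix j assume j: "j < m"
      show "0 < 1 - 2*t*pv j" using upv0[of j] unfolding tu by simp
      show "0 < 1 - 2*t*qv j" using upv0[of j] uq[of j] unfolding tu by simp
    next
      fix x assume "x < bsig - 4*c*(real m*S + r)"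
      then show "0 \<le> t*(x - (bsig - 4*c*(real m*S + r)))" using u0 unfolding tu
        by (simp add: mult_nonneg_nonpos)
    qed
    also have "exp (-t*KL) * (\<Prod>j<m. exp (t*(a j)\<^sup>2/(1 - 2*t*qv j)) / sqrt (1 - 2*t*qv j))
       \<le> exp (-t*KL) * exp (\<Sum>j<m. -(u * pv j) + 2*c\<^sup>2)"
    proof (rule mult_left_mono[OF prod_le_exp_sum])
      fix j assume "j \<in> {..<m}"
      then have j: "j < m" by simp
      have e: "1 - 2*t*qv j = 1 + 2*u*qv j" unfolding tu by simp
      have e0: "0 < 1 - 2*t*qv j" unfolding e using upv0[of j] uq[of j] by simp
      then show "0 \<le> exp (t*(a j)\<^sup>2/(1 - 2*t*qv j)) / sqrt (1 - 2*t*qv j)" by simp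
      have "exp (t*(a j)\<^sup>2/(1 - 2*t*qv j)) / sqrt (1 - 2*t*qv j) \<le> exp (-((2*u*pv j) - (2*u*pv j)\<^sup>2)/2)"
        unfolding e
        apply (rule fac_low)
        apply (use upv0[of j] in linarith)
        apply (use upv[OF j] c in linarith)
        apply (use uq[of j] in linarith)
        apply (use u0 tu in linarith)
        apply simp
        done
      also have "\<dots> \<le> exp (-(u * pv j) + 2*c\<^sup>2)"
      proof -
        have "(2*u*pv j)\<^sup>2 \<le> (2*c)\<^sup>2"
          using upv[OF j] upv0[of j] by (intro power_mono) auto
        then show ?thesis by (simp add: power_mult_distrib)
      qed
      finally show "exp (t*(a j)\<^sup>2/(1 - 2*t*qv j)) / sqrt (1 - 2*t*qv j) \<le> exp (-(u * pv j) + 2*c\<^sup>2)" .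
    qed simp
    also have "\<dots> = exp (-t*KL + (-(u*bsig) + 2*c\<^sup>2*real m))"
      by (simp add: mult_exp_exp sum_subtractf sum_distrib_left[symmetric] bsig_eq)
    also have "\<dots> \<le> exp (- c\<^sup>2 * real m / 2)"
    proof -
      have r0: "0 \<le> r" unfolding r_eq by (simp add: sum_nonneg)
      have uS: "u * S = c" unfolding u_def using S0 by simp
      have "-t*KL + (-(u*bsig) + 2*c\<^sup>2*real m) = -4*c*(u*S)*real m - 4*c*u*r + 2*c\<^sup>2*real m"
        unfolding tu KL_def by (simp add: algebra_simps)
      also have "\<dots> = -2*c\<^sup>2*real m - 4*c*u*r" unfolding uS by (simp add: power2_eq_square algebra_simps)
      also have "\<dots> \<le> -2*c\<^sup>2*real m" using c u0 r0 by simp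
      also have "\<dots> \<le> - c\<^sup>2 * real m / 2" by simp
      finally show ?thesis by simp
    qed
    also have "\<dots> \<le> 2 * exp (- c\<^sup>2 * real m / 2)" by simp
    finally show ?thesis by (simp add: ennreal_leI)
  qed
  show ?thesis using U L unfolding Post_def D_def B_def bsig_def S_def r_def by simp
qed


end
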